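(* Let $\mathcal X,\mathcal U$ be finite nonempty sets, $f:\mathcal X\times\mathcal U\to\mathcal X$ and $g:\mathcal X\to\mathbb R$. Then for all $x\in\mathcal X$, $$\max_{\pi\in\Pi}\min_{\tau\in\mathbb N} g(\xi_x^\pi(\tau))=\max_{\mathbf u\in\mathbb U}\min_{\tau\in\mathbb N} g(\xi_x^{\mathbf u}(\tau)).$$
   Context: $\mathbb N=\{0,1,\dots\}$; $\Pi$ is the set of maps $\mathcal X\to\mathcal U$; $\mathbb U$ is the set of sequences $\mathbb N\to\mathcal U$. For $\pi\in\Pi$: $\xi_x^\pi(0)=x$, $\xi_x^\pi(t+1)=f(\xi_x^\pi(t),\pi(\xi_x^\pi(t)))$. For $\mathbf u\in\mathbb U$: $\xi_x^{\mathbf u}(0)=x$, $\xi_x^{\mathbf u}(t+1)=f(\xi_x^{\mathbf u}(t),\mathbf u(t))$. *)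

theory Defs
  imports "HOL-Analysis.Analysis"
begin

primrec traj_pol :: "('x \<Rightarrow> 'u \<Rightarrow> 'x) \<Rightarrow> ('x \<Rightarrow> 'u) \<Rightarrow> 'x \<Rightarrow> nat \<Rightarrow> 'x" where
  "traj_pol f p x 0 = x"
| "traj_pol f p x (Suc t) = f (traj_pol f p x t) (p (traj_pol f p x t))"

primrec traj_seq :: "('x \<Rightarrow> 'u \<Rightarrow> 'x) \<Rightarrow> (nat \<Rightarrow> 'u) \<Rightarrow> 'x \<Rightarrow> nat \<Rightarrow> 'x" where
  "traj_seq f u x 0 = x"
| "traj_seq f u x (Suc t) = f (traj_seq f u x t) (u t)"

text \<open>min over tau in N of g along a trajectory (range is finite since 'x is finite).\<close>
definition val_pol :: "('x::finite \<Rightarrow> 'u \<Rightarrow> 'x) \<Rightarrow> ('x \<Rightarrow> real) \<Rightarrow> ('x \<Rightarrow> 'u) \<Rightarrow> 'x \<Rightarrow> real" where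
  "val_pol f g p x = Min (range (\<lambda>\<tau>. g (traj_pol f p x \<tau>)))"

definition val_seq :: "('x::finite \<Rightarrow> 'u \<Rightarrow> 'x) \<Rightarrow> ('x \<Rightarrow> real) \<Rightarrow> (nat \<Rightarrow> 'u) \<Rightarrow> 'x \<Rightarrow> real" where
  "val_seq f g u x = Min (range (\<lambda>\<tau>. g (traj_seq f u x \<tau>)))"

end

theory Submission
  imports Defs
begin

lemma traj_seq_shift:
  "traj_seq f w y (Suc t) = traj_seq f (\<lambda>t. w (Suc t)) (f y (w 0)) t"
  by (induction t) auto

lemma fin_rng: "finite (range (\<lambda>\<tau>. (g::'x::finite \<Rightarrow> real) (h \<tau>)))"
proof -
  have "range (\<lambda>\<tau>. g (h \<tau>)) \<subseteq> range g" by auto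
  then show ?thesis by (rule finite_subset) (rule finite_imageI, rule finite_class.finite_UNIV)
qed

lemma pol_eq_seq:
  "traj_seq f (\<lambda>t. p (traj_pol f p x t)) x t = traj_pol f p x t"
  by (induction t) auto

lemma val_seq_le:
  fixes f :: "'x::finite \<Rightarrow> 'u \<Rightarrow> 'x" and g :: "'x \<Rightarrow> real"
  shows "\<exists>p. val_seq f g u x \<le> val_pol f g p x"
proof -
  define c where "c = val_seq f g u x"
  have gu: "\<forall>t. c \<le> g (traj_seq f u x t)"
    unfolding c_def val_seq_def by (intro allI Min_le fin_rng rangeI)
  define S where "S = {y. \<exists>w. \<forall>t. c \<le> g (traj_seq f w y t)}"
  have xS: "x \<in> S" unfolding S_def using gu by blast
  have step: "\<exists>a. f y a \<in> S" if "y \<in> S" for y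
  proof -
    from that obtain w where w: "\<forall>t. c \<le> g (traj_seq f w y t)" unfolding S_def by blast
    have "\<forall>t. c \<le> g (traj_seq f (\<lambda>t. w (Suc t)) (f y (w 0)) t)"
    proof
      fix t
      have "c \<le> g (traj_seq f w y (Suc t))" using w by blast
      then show "c \<le> g (traj_seq f (\<lambda>t. w (Suc t)) (f y (w 0)) t)"
        by (simp only: traj_seq_shift)
    qed
    then show ?thesis unfolding S_def by blast
  qed
  have gS: "c \<le> g y" if "y \<in> S" for y
  proof -
    from that obtain w where w: "\<forall>t. c \<le> g (traj_seq f w y t)" unfolding S_def by blast
    then have "c \<le> g (traj_seq f w y 0)" by blast
    then show ?thesis by simp
  qed
  define p where "p y = (SOME a. f y a \<in> S)" for y
  have pS: "f y (p y) \<in> S" if "y \<in> S" for y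
    unfolding p_def by (rule someI_ex[OF step[OF that]])
  have inS: "traj_pol f p x t \<in> S" for t
  proof (induction t)
    case 0 then show ?case using xS by simp
  next
    case (Suc t)
    have "f (traj_pol f p x t) (p (traj_pol f p x t)) \<in> S"
      using pS Suc by blast
    then show ?case by simp
  qed
  have "c \<le> val_pol f g p x"
    unfolding val_pol_def
  proof (rule Min.boundedI)
    show "finite (range (\<lambda>\<tau>. g (traj_pol f p x \<tau>)))" by (rule fin_rng)
  next
    show "range (\<lambda>\<tau>. g (traj_pol f p x \<tau>)) \<noteq> {}" by simp
  next
    fix a assume "a \<in> range (\<lambda>\<tau>. g (traj_pol f p x \<tau>))"
    then show "c \<le> a" using inS gS by auto
  qed
  then show ?thesis unfolding c_def by blast
qed

theorem mainTheorem4: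
  fixes f :: "'x::finite \<Rightarrow> 'u::finite \<Rightarrow> 'x" and g :: "'x \<Rightarrow> real" and x :: 'x
  shows "\<exists>v. (\<exists>p. val_pol f g p x = v) \<and> (\<forall>p. val_pol f g p x \<le> v)
            \<and> (\<exists>u. val_seq f g u x = v) \<and> (\<forall>u. val_seq f g u x \<le> v)"
proof -
  define v where "v = Max (range (\<lambda>p. val_pol f g p x))"
  have fin: "finite (range (\<lambda>p. val_pol f g p x))"
    by (rule finite_imageI) (rule finite_class.finite_UNIV)
  have le: "\<forall>p. val_pol f g p x \<le> v"
  proof
    fix q
    show "val_pol f g q x \<le> v" unfolding v_def by (rule Max_ge[OF fin]) (rule rangeI)
  qed
  have "v \<in> range (\<lambda>p. val_pol f g p x)" unfolding v_def
    by (rule Max_in[OF fin]) simp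
  then obtain p where p: "val_pol f g p x = v" by (metis rangeE)
  have eqf: "(\<lambda>\<tau>. g (traj_seq f (\<lambda>t. p (traj_pol f p x t)) x \<tau>)) = (\<lambda>\<tau>. g (traj_pol f p x \<tau>))"
    by (simp only: pol_eq_seq)
  have sq: "val_seq f g (\<lambda>t. p (traj_pol f p x t)) x = v"
    using p unfolding val_seq_def val_pol_def eqf .
  have all: "\<forall>u. val_seq f g u x \<le> v"
  proof
    fix u
    obtain q where "val_seq f g u x \<le> val_pol f g q x" using val_seq_le by blast
    then show "val_seq f g u x \<le> v" using le by (meson order.trans)
  qed
  show ?thesis
    apply (rule exI[of _ v])
    apply (intro conjI)
       apply (rule exI[of _ p], rule p)
      apply (rule le)
     apply (rule exI[of _ "\<lambda>t. p (traj_pol f p x t)"], rule sq)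
    apply (rule all)
    done
qed

end
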